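(* Let $m\in\mathbb Z$. For all $N\ge1$ and all $z=x+iy$ with $-\pi/10\le x\le2\pi$ and $y=8\pi/5$, $$\frac{e^{z/N}}{2\pi i\,(e^{z/N}-1)^{m+1}(e^{z/N})_N}=O(N^{m+1}),$$ with implied constant depending only on $m$.
   Context: $(q)_N:=(1-q)(1-q^2)\cdots(1-q^N)$. *)

theory Defs
  imports Complex_Main
begin

definition qpoch :: "complex \<Rightarrow> nat \<Rightarrow> complex" where
  "qpoch q N = (\<Prod>k=1..N. (1 - q ^ k))"

end

theory Submission
  imports Defs "HOL-Analysis.Analysis"
begin


lemma sin_nat_mult_le: "\<bar>sin (real n * t)\<bar> \<le> real n * \<bar>sin t\<bar>"
proof (induction n)
  case 0 then show ?case by simp
next
  case (Suc n)
  have "sin (real (Suc n) * t) = sin (real n * t) * cos t + cos (real n * t) * sin t"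
    by (simp add: distrib_right sin_add)
  also have "\<bar>\<dots>\<bar> \<le> \<bar>sin (real n * t)\<bar> * \<bar>cos t\<bar> + \<bar>cos (real n * t)\<bar> * \<bar>sin t\<bar>"
    by (metis abs_mult abs_triangle_ineq)
  also have "\<dots> \<le> \<bar>sin (real n * t)\<bar> * 1 + 1 * \<bar>sin t\<bar>"
    by (intro add_mono mult_left_mono mult_right_mono) auto
  finally show ?case using Suc by (simp add: distrib_right)
qed

lemma norm_1_minus_exp_Complex:
  "2 * exp (a/2) * \<bar>sin (b/2)\<bar> \<le> norm (1 - exp (Complex a b))"
proof -
  have e: "1 - exp (Complex a b) = Complex (1 - exp a * cos b) (- (exp a * sin b))"
    by (simp add: exp_Complex complex_eq_iff)
  have n2: "(norm (1 - exp (Complex a b)))^2 = (1 - exp a * cos b)^2 + (exp a * sin b)^2"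
    unfolding e by (simp add: cmod_def)
  have c: "cos b = 1 - 2 * (sin (b/2))^2"
    using cos_double_sin[of "b/2"] by simp
  have ea: "exp a = (exp (a/2))^2" by (simp add: power2_eq_square flip: exp_add)
  have "(2 * exp (a/2) * \<bar>sin (b/2)\<bar>)^2 = 4 * exp a * (sin (b/2))^2"
    by (simp add: power_mult_distrib ea)
  also have "\<dots> \<le> (1 - exp a * cos b)^2 + (exp a * sin b)^2"
  proof -
    have "(1 - exp a * cos b)^2 + (exp a * sin b)^2 - (1 - 2 * exp a * cos b + (exp a)^2) = (exp a)^2 * ((sin b)^2 + (cos b)^2 - 1)"
      by (simp only: power2_eq_square) algebra
    then have "(1 - exp a * cos b)^2 + (exp a * sin b)^2 = 1 - 2 * exp a * cos b + (exp a)^2" by simp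
    also have "\<dots> = (1 - exp a)^2 + 4 * exp a * (sin (b/2))^2"
      by (simp add: c power2_eq_square algebra_simps)
    finally show ?thesis by simp
  qed
  finally have "(2 * exp (a/2) * \<bar>sin (b/2)\<bar>)^2 \<le> (norm (1 - exp (Complex a b)))^2"
    using n2 by simp
  then show ?thesis
    by (rule power2_le_imp_le) simp
qed

lemma sin_between:
  assumes "0 \<le> a" "a \<le> pi/2" "a \<le> s" "s \<le> pi - a"
  shows "sin a \<le> sin s"
proof (cases "s \<le> pi/2")
  case True
  then show ?thesis using assms by (intro sin_monotone_2pi_le) auto
next
  case False
  have "sin a \<le> sin (pi - s)" using assms False by (intro sin_monotone_2pi_le) auto
  then show ?thesis by simp
qed

lemma sin_lower_small:
  assumes "0 \<le> s" "s \<le> pi/6"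
  shows "19/20 * s \<le> sin s"
proof -
  have "\<bar>sin s - (\<Sum>m<5. sin_coeff m * s ^ m)\<bar> \<le> inverse (fact 5) * \<bar>s\<bar> ^ 5"
    by (rule Maclaurin_sin_bound)
  moreover have "(\<Sum>m<5. sin_coeff m * s ^ m) = s - s^3/6"
  proof -
    have "(\<Sum>m<5. sin_coeff m * s ^ m) = sin_coeff 0 * s^0 + sin_coeff 1 * s^1 + sin_coeff 2 * s^2 + sin_coeff 3 * s^3 + sin_coeff 4 * s^4"
      by (simp add: numeral_eq_Suc lessThan_Suc)
    moreover have "sin_coeff 0 = 0" "sin_coeff 1 = 1" "sin_coeff 2 = 0" "sin_coeff 3 = -1/6" "sin_coeff 4 = 0"
      by (simp_all add: sin_coeff_def fact_numeral)
    ultimately show ?thesis by simp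
  qed
  ultimately have b: "s - s^3/6 - s^5/120 \<le> sin s"
    using assms by (simp add: fact_numeral abs_if split: if_splits)
  have p: "pi \<le> 3.1416" using pi_approx by simp
  have s1: "s \<le> 0.5236" using assms p by simp
  have s2: "s^2 \<le> 0.5236^2" using s1 assms by (intro power_mono) auto
  have s4: "s^4 \<le> 0.5236^4" using s1 assms by (intro power_mono) auto
  have "s^3/6 + s^5/120 = s * (s^2/6 + s^4/120)" by (simp add: power2_eq_square power_numeral_reduce field_simps)
  also have "\<dots> \<le> s * (1/20)"
  proof (intro mult_left_mono)
    show "s^2/6 + s^4/120 \<le> 1/20" using s2 s4 by (simp add: power_numeral_reduce)
  qed (use assms in auto)
  finally show ?thesis using b by simp
qed



lemma fact_exp_ge: "real n ^ n \<le> fact n * exp (real n)"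
proof (induction n)
  case 0 then show ?case by simp
next
  case (Suc n)
  have key: "(real n + 1) ^ n \<le> real n ^ n * exp 1"
  proof (cases "n = 0")
    case True then show ?thesis by simp
  next
    case False
    then have np: "real n > 0" by simp
    have "1 + 1 / real n \<le> exp (1 / real n)" by (rule exp_ge_add_one_self)
    then have "real n + 1 \<le> real n * exp (1 / real n)"
      using np by (simp add: field_simps)
    then have "(real n + 1) ^ n \<le> (real n * exp (1 / real n)) ^ n"
      by (intro power_mono) auto
    also have "\<dots> = real n ^ n * exp (real n * (1 / real n))"
      by (simp add: power_mult_distrib exp_of_nat_mult[symmetric])
    also have "\<dots> = real n ^ n * exp 1" using np by simp
    finally show ?thesis .
  qed
  have "real (Suc n) ^ Suc n = (real n + 1) * (real n + 1) ^ n" by (simp add: add.commute)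
  also have "\<dots> \<le> (real n + 1) * (real n ^ n * exp 1)"
    using key by (intro mult_left_mono) auto
  also have "\<dots> \<le> (real n + 1) * (fact n * exp (real n) * exp 1)"
    using Suc by (intro mult_left_mono mult_right_mono) auto
  also have "\<dots> = fact (Suc n) * exp (real (Suc n))"
    by (simp add: exp_add[symmetric] algebra_simps)
  finally show ?case .
qed

lemma key_numeric:
  "pi/40 \<le> (5/24)*(ln(19*pi/60) - 1) + (5/16)*ln 2 + (5/24)*(ln 3 - ln 2)"
proof -
  have p1: "3.1415 \<le> pi" "pi \<le> 3.1416" using pi_approx by simp_all
  have e1: "exp (19/100::real) \<le> 100/81"
  proof -
    have "1 + (-(19/100)) \<le> exp (-(19/100::real))" by (rule exp_ge_add_one_self)
    then have "81/100 \<le> exp (-(19/100::real))" by simp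
    then have "1 / exp (-(19/100::real)) \<le> 1 / (81/100)"
      by (intro divide_left_mono) auto
    then show ?thesis by (simp add: exp_minus field_simps)
  qed
  have "exp (2 + 6*pi/25) \<le> exp (276/100)" using p1 by simp
  also have "exp (276/100::real) = exp 1 ^ 2 * exp (19/100) ^ 4"
    by (simp add: exp_of_nat_mult[symmetric] exp_add[symmetric])
  also have "\<dots> \<le> (272/100) ^ 2 * (100/81) ^ 4"
    using e_less_272 e1 by (intro mult_mono power_mono) auto
  also have "\<dots> \<le> 2 * (19*pi/20)^2"
  proof -
    have "19*3.1415/20 \<le> 19*pi/20" using p1 by simp
    then have "(19*3.1415/20)^2 \<le> (19*pi/20::real)^2" by (intro power_mono) auto
    moreover have "(272/100) ^ 2 * (100/81) ^ 4 \<le> 2 * (19*3.1415/20::real)^2" by (simp add: power_numeral_reduce)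
    ultimately show ?thesis by linarith
  qed
  finally have E: "exp (2 + 6*pi/25) \<le> 2 * (19*pi/20)^2" .
  have "2 + 6*pi/25 \<le> ln (2 * (19*pi/20)^2)"
    using E by (subst ln_ge_iff) auto
  also have "\<dots> = ln 2 + 2 * ln (19*pi/20)"
    by (simp add: ln_mult ln_realpow)
  finally have A: "2 + 6*pi/25 \<le> ln 2 + 2 * ln (19*pi/20)" .
  have B: "ln (19*pi/60) = ln (19*pi/20) - ln 3"
  proof -
    have "19*pi/60 = (19*pi/20) / 3" by simp
    then have "ln (19*pi/60) = ln ((19*pi/20) / 3)" by metis
    also have "\<dots> = ln (19*pi/20) - ln 3" by (rule ln_divide_pos) auto
    finally show ?thesis .
  qed
  show ?thesis unfolding B using A by (simp add: ring_distribs)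
qed



lemma sum_ln_fact: "(\<Sum>k=1..n. ln (real k)) = ln (fact n)"
proof (induction n)
  case 0 then show ?case by simp
next
  case (Suc n)
  have "(\<Sum>k=1..Suc n. ln (real k)) = (\<Sum>k=1..n. ln (real k)) + ln (real (Suc n))"
    by simp
  also have "\<dots> = ln (fact n) + ln (real (Suc n))" using Suc by simp
  also have "\<dots> = ln (fact (Suc n))"
    by (simp add: ln_mult del: of_nat_Suc)
  finally show ?case .
qed

lemma xlogx_aux:
  fixes u v c :: real
  assumes "0 < u" "u \<le> v" "0 < c" "c * v \<le> 1"
  shows "v * (ln (c * v) - 1) \<le> u * (ln (c * u) - 1)"
proof -
  have v0: "0 < v" using assms by linarith
  have l1: "ln (c * v) \<le> 0" using assms v0 by simp
  have l2: "ln (c * v) - ln (c * u) = ln (v / u)"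
    using assms v0 by (simp add: ln_mult ln_divide_pos)
  have l3: "ln (v / u) \<le> v / u - 1" using assms v0 by (intro ln_le_minus_one) simp
  have "u * ln (v / u) \<le> u * (v / u - 1)" using l3 assms by (intro mult_left_mono) auto
  also have "\<dots> = v - u" using assms by (simp add: field_simps)
  finally have l4: "u * ln (v / u) \<le> v - u" .
  have l5: "(v - u) * ln (c * v) \<le> 0" using l1 assms by (simp add: mult_nonneg_nonpos)
  have "v * (ln (c * v) - 1) - u * (ln (c * u) - 1) = (v - u) * ln (c * v) + u * (ln (c * v) - ln (c * u)) - (v - u)"
    by (simp add: algebra_simps)
  also have "\<dots> = (v - u) * ln (c * v) + u * ln (v / u) - (v - u)" using l2 by simp
  also have "\<dots> \<le> 0" using l4 l5 by linarith
  finally show ?thesis by simp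
qed

lemma kh_le: assumes "N > 0"
  shows "real k * (4*pi/(5*real N)) \<le> r * pi \<longleftrightarrow> 4 * real k \<le> 5 * r * real N"
proof -
  have "real k * (4*pi/(5*real N)) = (4 * real k / (5 * real N)) * pi" by simp
  then have "real k * (4*pi/(5*real N)) \<le> r * pi \<longleftrightarrow> 4 * real k / (5 * real N) \<le> r"
    by (subst \<open>real k * (4*pi/(5*real N)) = _\<close>) (rule mult_le_cancel_right_pos, simp)
  also have "\<dots> \<longleftrightarrow> 4 * real k \<le> 5 * r * real N" using assms by (simp add: field_simps)
  finally show ?thesis .
qed

lemma kh_ge: assumes "N > 0"
  shows "r * pi \<le> real k * (4*pi/(5*real N)) \<longleftrightarrow> 5 * r * real N \<le> 4 * real k"
proof -
  have "real k * (4*pi/(5*real N)) = (4 * real k / (5 * real N)) * pi" by simp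
  then have "r * pi \<le> real k * (4*pi/(5*real N)) \<longleftrightarrow> r \<le> 4 * real k / (5 * real N)"
    by (subst \<open>real k * (4*pi/(5*real N)) = _\<close>) (rule mult_le_cancel_right_pos, simp)
  also have "\<dots> \<longleftrightarrow> 5 * r * real N \<le> 4 * real k" using assms by (simp add: field_simps)
  finally show ?thesis .
qed



lemma pointwise_bound:
  fixes N k :: nat
  assumes N: "N \<ge> 1" and k: "1 \<le> k" "k \<le> N"
  defines "h \<equiv> 4*pi/(5*real N)"
  shows "(if 24*k \<le> 5*N then ln (19/10 * h * real k) else 0)
       + (if 5*N \<le> 16*k \<and> 16*k \<le> 15*N then ln 2 / 2 else 0)
       + (if 5*N \<le> 12*k \<and> 6*k \<le> 5*N then (ln 3 - ln 2) / 2 else 0)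
       \<le> ln (2 * sin (real k * h))"
proof -
  have N0: "N > 0" using N by simp
  define s where "s = real k * h"
  have s0: "0 < s" using k N unfolding s_def h_def by simp
  have s1: "s \<le> 4/5 * pi" unfolding s_def h_def using kh_le[OF N0, of k "4/5"] k by simp
  show ?thesis
  proof (cases "24*k \<le> 5*N")
    case True
    have n2: "\<not> (5*N \<le> 16*k)" using True N by linarith
    have n3: "\<not> (5*N \<le> 12*k)" using True N by linarith
    have "s \<le> 1/6 * pi" unfolding s_def h_def using kh_le[OF N0, of k "1/6"] True
      by (simp add: of_nat_mult[symmetric] del: of_nat_mult)
    then have "19/20 * s \<le> sin s" using s0 by (intro sin_lower_small) auto
    then have le: "19/10 * h * real k \<le> 2 * sin s" unfolding s_def by (simp add: mult.commute mult.left_commute)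
    have pos: "0 < 19/10 * h * real k" using k N unfolding h_def by simp
    have "ln (19/10 * h * real k) \<le> ln (2 * sin s)"
      using pos le ln_le_cancel_iff[of "19/10 * h * real k" "2 * sin s"] by linarith
    then show ?thesis using n2 n3 True by (simp add: s_def)
  next
    case False
    have sge: "1/6 * pi \<le> s" unfolding s_def h_def using kh_ge[OF N0, of "1/6" k] False
      by (simp add: of_nat_mult[symmetric] del: of_nat_mult)
    have half: "1/2 \<le> sin s"
      using sin_between[of "pi/6" s] sge s1 sin_30 by simp
    show ?thesis
    proof (cases "5*N \<le> 12*k \<and> 6*k \<le> 5*N")
      case True
      have c2: "5*N \<le> 16*k \<and> 16*k \<le> 15*N" using True by linarith
      have a: "1/3 * pi \<le> s" unfolding s_def h_def using kh_ge[OF N0, of "1/3" k] True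
        by (simp add: of_nat_mult[symmetric] del: of_nat_mult)
      have b: "s \<le> 2/3 * pi" unfolding s_def h_def using kh_le[OF N0, of k "2/3"] True
        by (simp add: of_nat_mult[symmetric] del: of_nat_mult)
      have "sqrt 3 / 2 \<le> sin s"
        using sin_between[of "pi/3" s] a b sin_60 by simp
      then have "sqrt 3 \<le> 2 * sin s" by simp
      then have "ln (sqrt 3) \<le> ln (2 * sin s)" using half by (subst ln_le_cancel_iff) auto
      then have "ln 3 / 2 \<le> ln (2 * sin s)" by (simp add: ln_sqrt)
      then show ?thesis using True c2 False by (simp add: s_def field_simps)
    next
      case nc3: False
      show ?thesis
      proof (cases "5*N \<le> 16*k \<and> 16*k \<le> 15*N")
        case True
        have a: "1/4 * pi \<le> s" unfolding s_def h_def using kh_ge[OF N0, of "1/4" k] True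
          by (simp add: of_nat_mult[symmetric] del: of_nat_mult)
        have b: "s \<le> 3/4 * pi" unfolding s_def h_def using kh_le[OF N0, of k "3/4"] True
          by (simp add: of_nat_mult[symmetric] del: of_nat_mult)
        have "sqrt 2 / 2 \<le> sin s"
          using sin_between[of "pi/4" s] a b sin_45 by simp
        then have "sqrt 2 \<le> 2 * sin s" by simp
        then have "ln (sqrt 2) \<le> ln (2 * sin s)" using half by (subst ln_le_cancel_iff) auto
        then have "ln 2 / 2 \<le> ln (2 * sin s)" by (simp add: ln_sqrt)
        then show ?thesis using True nc3 False by (auto simp: s_def)
      next
        case False
        have "0 \<le> ln (2 * sin s)" using half by simp
        then show ?thesis using False nc3 \<open>\<not> 24*k \<le> 5*N\<close> by (auto simp: s_def)
      qed
    qed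
  qed
qed



lemma card_lower:
  fixes lo hi N :: nat
  assumes "{lo..hi} \<subseteq> {k\<in>{1..N}. P k}"
  shows "real hi + 1 - real lo \<le> real (card {k\<in>{1..N}. P k})"
proof -
  have "card {lo..hi} \<le> card {k\<in>{1..N}. P k}"
    using assms by (intro card_mono) auto
  moreover have "real hi + 1 - real lo \<le> real (card {lo..hi})"
    by (cases "lo \<le> Suc hi") (auto simp: of_nat_diff)
  ultimately show ?thesis by linarith
qed

lemma sum_if_const:
  fixes c :: real
  shows "(\<Sum>k\<in>{1..N::nat}. if P k then c else 0) = real (card {k\<in>{1..N}. P k}) * c"
  by (simp add: sum.inter_filter[symmetric])

lemma sin_sum_lower:
  assumes N: "N \<ge> 1"
  shows "pi/40 * real N - (ln 2 + ln 3) \<le> (\<Sum>k=1..N. ln (2 * sin (real k * (4*pi/(5*real N)))))"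
proof -
  define h where "h = 4*pi/(5*real N)"
  define \<kappa> where "\<kappa> = 19/10 * h"
  define A where "A = 5*N div 24"
  define F1 where "F1 = (\<lambda>k::nat. if 24*k \<le> 5*N then ln (19/10 * h * real k) else 0)"
  define F2 where "F2 = (\<lambda>k::nat. if 5*N \<le> 16*k \<and> 16*k \<le> 15*N then ln 2 / 2 else (0::real))"
  define F3 where "F3 = (\<lambda>k::nat. if 5*N \<le> 12*k \<and> 6*k \<le> 5*N then (ln 3 - ln 2) / 2 else (0::real))"
  have N0: "real N > 0" using N by simp
  have hpos: "h > 0" using N0 unfolding h_def by simp
  have kpos: "\<kappa> > 0" using hpos unfolding \<kappa>_def by simp
  have "(\<Sum>k=1..N. F1 k + F2 k + F3 k) \<le> (\<Sum>k=1..N. ln (2 * sin (real k * h)))"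
    unfolding F1_def F2_def F3_def h_def
    by (intro sum_mono pointwise_bound) (use N in auto)
  moreover have "(\<Sum>k=1..N. F1 k + F2 k + F3 k) = (\<Sum>k=1..N. F1 k) + (\<Sum>k=1..N. F2 k) + (\<Sum>k=1..N. F3 k)"
    by (simp add: sum.distrib)
  ultimately have main: "(\<Sum>k=1..N. F1 k) + (\<Sum>k=1..N. F2 k) + (\<Sum>k=1..N. F3 k) \<le> (\<Sum>k=1..N. ln (2 * sin (real k * h)))"
    by linarith
  have set1: "{k\<in>{1..N}. 24*k \<le> 5*N} = {1..A}"
    unfolding A_def by auto
  have S1eq: "(\<Sum>k=1..N. F1 k) = (\<Sum>k=1..A. ln (\<kappa> * real k))"
  proof -
    have "(\<Sum>k=1..N. F1 k) = (\<Sum>k\<in>{k\<in>{1..N}. 24*k \<le> 5*N}. ln (19/10 * h * real k))"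
      unfolding F1_def by (subst sum.inter_filter) auto
    also have "\<dots> = (\<Sum>k=1..A. ln (19/10 * h * real k))" by (simp only: set1)
    finally show ?thesis unfolding \<kappa>_def by (simp add: mult.assoc)
  qed
  have S1eq2: "(\<Sum>k=1..A. ln (\<kappa> * real k)) = real A * ln \<kappa> + ln (fact A)"
  proof -
    have "(\<Sum>k=1..A. ln (\<kappa> * real k)) = (\<Sum>k=1..A. ln \<kappa> + ln (real k))"
      using kpos by (intro sum.cong) (auto simp: ln_mult)
    also have "\<dots> = real A * ln \<kappa> + ln (fact A)"
      using sum_ln_fact[of A] by (simp add: sum.distrib)
    finally show ?thesis .
  qed
  define v where "v = 5 * real N / 24"
  have kv: "\<kappa> * v = 19*pi/60" unfolding \<kappa>_def h_def v_def using N0 by (simp add: field_simps)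
  have kv1: "\<kappa> * v \<le> 1" unfolding kv using pi_approx by simp
  have Av: "real A \<le> v"
  proof -
    have "24 * A \<le> 5 * N" unfolding A_def by simp
    then have "24 * real A \<le> 5 * real N" by (simp flip: of_nat_mult)
    then show ?thesis unfolding v_def by simp
  qed
  have S1: "v * (ln (19*pi/60) - 1) \<le> (\<Sum>k=1..N. F1 k)"
  proof (cases "A = 0")
    case True
    have "ln (\<kappa> * v) \<le> 0" using kv1 kpos N0 unfolding v_def by simp
    then have "v * (ln (\<kappa> * v) - 1) \<le> 0" unfolding v_def using N0 by (simp add: mult_nonneg_nonpos)
    then show ?thesis unfolding S1eq S1eq2 using True kv by simp
  next
    case False
    then have A0: "real A > 0" by simp
    have "ln (real A ^ A) \<le> ln (fact A * exp (real A))"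
      using fact_exp_ge[of A] A0 by (subst ln_le_cancel_iff) auto
    then have lf: "real A * ln (real A) - real A \<le> ln (fact A)"
      using A0 by (simp add: ln_realpow ln_mult)
    have "v * (ln (\<kappa> * v) - 1) \<le> real A * (ln (\<kappa> * real A) - 1)"
      by (rule xlogx_aux) (use A0 Av kpos kv1 in auto)
    also have "\<dots> = real A * ln \<kappa> + real A * ln (real A) - real A"
      using A0 kpos by (simp add: ln_mult algebra_simps)
    also have "\<dots> \<le> real A * ln \<kappa> + ln (fact A)" using lf by linarith
    finally show ?thesis unfolding S1eq S1eq2 kv .
  qed
  have S2: "(10 * real N - 14)/16 * (ln 2 / 2) \<le> (\<Sum>k=1..N. F2 k)"
  proof -
    define hi where "hi = 15*N div 16"
    define lo where "lo = (5*N+15) div 16" 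
    have "real hi + 1 - real lo \<le> real (card {k\<in>{1..N}. 5*N \<le> 16*k \<and> 16*k \<le> 15*N})"
      unfolding hi_def lo_def by (rule card_lower) (use N in \<open>auto; presburger\<close>)
    moreover have "15 * N \<le> 16 * hi + 15" unfolding hi_def by presburger
    then have "15 * real N \<le> 16 * real hi + 15" by (simp flip: of_nat_mult of_nat_add)
    moreover have "16 * lo \<le> 5 * N + 15" unfolding lo_def by presburger
    then have "16 * real lo \<le> 5 * real N + 15" by (simp flip: of_nat_mult of_nat_add)
    ultimately have c: "(10 * real N - 14)/16 \<le> real (card {k\<in>{1..N}. 5*N \<le> 16*k \<and> 16*k \<le> 15*N})"
      by (simp add: field_simps)
    have "(10 * real N - 14)/16 * (ln 2 / 2) \<le> real (card {k\<in>{1..N}. 5*N \<le> 16*k \<and> 16*k \<le> 15*N}) * (ln 2 / 2)"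
      using c by (intro mult_right_mono) auto
    then show ?thesis unfolding F2_def sum_if_const .
  qed
  have S3: "(5 * real N - 9)/12 * ((ln 3 - ln 2) / 2) \<le> (\<Sum>k=1..N. F3 k)"
  proof -
    define hi where "hi = 5*N div 6"
    define lo where "lo = (5*N+11) div 12" 
    have "real hi + 1 - real lo \<le> real (card {k\<in>{1..N}. 5*N \<le> 12*k \<and> 6*k \<le> 5*N})"
      unfolding hi_def lo_def by (rule card_lower) (use N in \<open>auto; presburger\<close>)
    moreover have "5 * N \<le> 6 * hi + 5" unfolding hi_def by presburger
    then have "5 * real N \<le> 6 * real hi + 5" by (simp flip: of_nat_mult of_nat_add)
    moreover have "12 * lo \<le> 5 * N + 11" unfolding lo_def by presburger
    then have "12 * real lo \<le> 5 * real N + 11" by (simp flip: of_nat_mult of_nat_add)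
    ultimately have c: "(5 * real N - 9)/12 \<le> real (card {k\<in>{1..N}. 5*N \<le> 12*k \<and> 6*k \<le> 5*N})"
      by (simp add: field_simps)
    have l32: "ln 2 \<le> ln (3::real)" by simp
    have "(5 * real N - 9)/12 * ((ln 3 - ln 2) / 2) \<le> real (card {k\<in>{1..N}. 5*N \<le> 12*k \<and> 6*k \<le> 5*N}) * ((ln 3 - ln 2) / 2)"
      using c l32 by (intro mult_right_mono) auto
    then show ?thesis unfolding F3_def sum_if_const .
  qed
  define K where "K = (5/24)*(ln(19*pi/60) - 1) + (5/16)*ln 2 + (5/24)*(ln 3 - ln 2)"
  have key0: "pi/40 * real N \<le> real N * ((5/24)*(ln(19*pi/60) - 1) + (5/16)*ln 2 + (5/24)*(ln 3 - ln 2))"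
    using mult_left_mono[OF key_numeric, of "real N"] N0 by (simp add: mult.commute)
  have key: "pi/40 * real N \<le> real N * K" using key0 unfolding K_def .
  have l2: "0 \<le> ln (2::real)" by simp
  have l32: "ln 2 \<le> ln (3::real)" by simp
  have expand: "v * (ln (19*pi/60) - 1) + (10 * real N - 14)/16 * (ln 2 / 2) + (5 * real N - 9)/12 * ((ln 3 - ln 2) / 2)
      = real N * ((5/24)*(ln(19*pi/60) - 1) + (5/16)*ln 2 + (5/24)*(ln 3 - ln 2)) - (7/16) * ln 2 - (3/8) * (ln 3 - ln 2)"
    unfolding v_def by (simp add: field_simps)
  have "pi/40 * real N - (ln 2 + ln 3) \<le> real N * K - 7/16 * ln 2 - 3/8 * (ln 3 - ln 2)"
    using key l2 l32 by argo
  also have "\<dots> = v * (ln (19*pi/60) - 1) + (10 * real N - 14)/16 * (ln 2 / 2) + (5 * real N - 9)/12 * ((ln 3 - ln 2) / 2)"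
    using expand unfolding K_def by simp
  also have "\<dots> \<le> (\<Sum>k=1..N. F1 k) + (\<Sum>k=1..N. F2 k) + (\<Sum>k=1..N. F3 k)"
    using S1 S2 S3 by linarith
  also have "\<dots> \<le> (\<Sum>k=1..N. ln (2 * sin (real k * h)))" by (rule main)
  finally show ?thesis unfolding h_def .
qed



lemma abs_exp_minus_1: fixes a :: real shows "\<bar>exp a - 1\<bar> \<le> \<bar>a\<bar> * exp \<bar>a\<bar>"
proof (cases "a \<ge> 0")
  case True
  have "1 + (-a) \<le> exp (-a)" using exp_ge_add_one_self[of "-a"] by simp
  then have "exp a * (1 - a) \<le> exp a * exp (-a)" by (intro mult_left_mono) auto
  then have "exp a - 1 \<le> a * exp a" by (simp add: exp_minus field_simps)
  then show ?thesis using True by simp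
next
  case False
  have h1: "1 + a \<le> exp a" by (rule exp_ge_add_one_self)
  have "1 \<le> exp \<bar>a\<bar>" by simp
  have h2: "exp a \<le> 1" using False by simp
  have h3: "\<bar>exp a - 1\<bar> = 1 - exp a" using h2 by simp
  have h4: "\<bar>a\<bar> = - a" using False by simp
  have "\<bar>exp a - 1\<bar> \<le> \<bar>a\<bar>" unfolding h3 h4 using h1 by linarith
  also have "\<dots> \<le> \<bar>a\<bar> * exp \<bar>a\<bar>" using \<open>1 \<le> exp \<bar>a\<bar>\<close>
    by (simp add: mult_le_cancel_left1)
  finally show ?thesis .
qed

lemma norm_exp_Complex_minus_1:
  "norm (exp (Complex a b) - 1) \<le> \<bar>exp a - 1\<bar> + exp (a/2) * \<bar>b\<bar>"
proof -
  have e: "exp (Complex a b) - 1 = Complex (exp a * cos b - 1) (exp a * sin b)"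
    by (simp add: exp_Complex complex_eq_iff)
  have ea: "exp a = (exp (a/2))^2" by (simp add: power2_eq_square flip: exp_add)
  have c: "cos b = 1 - 2 * (sin (b/2))^2"
    using cos_double_sin[of "b/2"] by simp
  have "(norm (exp (Complex a b) - 1))^2 = (exp a * cos b - 1)^2 + (exp a * sin b)^2"
    unfolding e by (simp add: cmod_def)
  also have "\<dots> = (exp a - 1)^2 + 4 * exp a * (sin (b/2))^2"
  proof -
    have "(exp a * cos b - 1)^2 + (exp a * sin b)^2 - (1 - 2 * exp a * cos b + (exp a)^2) = (exp a)^2 * ((sin b)^2 + (cos b)^2 - 1)"
      by (simp only: power2_eq_square) algebra
    then have "(exp a * cos b - 1)^2 + (exp a * sin b)^2 = 1 - 2 * exp a * cos b + (exp a)^2" by simp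
    also have "\<dots> = (exp a - 1)^2 + 4 * exp a * (sin (b/2))^2"
      by (simp add: c power2_eq_square algebra_simps)
    finally show ?thesis .
  qed
  also have "\<dots> \<le> (exp a - 1)^2 + exp a * b^2"
  proof -
    have "\<bar>sin (b/2)\<bar> \<le> \<bar>b/2\<bar>" by (rule abs_sin_x_le_abs_x)
    then have "(sin (b/2))^2 \<le> (b/2)^2"
      by (metis abs_le_square_iff)
    then show ?thesis by (simp add: power_divide)
  qed
  also have "\<dots> \<le> (\<bar>exp a - 1\<bar> + exp (a/2) * \<bar>b\<bar>)^2"
  proof -
    have e2: "(exp (a/2))^2 = exp a" using ea by simp
    have "(\<bar>exp a - 1\<bar> + exp (a/2) * \<bar>b\<bar>)^2 = \<bar>exp a - 1\<bar>^2 + 2 * \<bar>exp a - 1\<bar> * (exp (a/2) * \<bar>b\<bar>) + (exp (a/2))^2 * \<bar>b\<bar>^2"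
      by (simp add: power2_sum power_mult_distrib)
    also have "\<dots> = (exp a - 1)^2 + 2 * \<bar>exp a - 1\<bar> * (exp (a/2) * \<bar>b\<bar>) + exp a * b^2"
      by (simp add: e2)
    finally show ?thesis by simp
  qed
  finally show ?thesis
    by (rule power2_le_imp_le) simp
qed

lemma inv_powi_bound:
  fixes d c1 c2 :: real
  assumes "0 < c1" "c1 \<le> d" "d \<le> c2"
  shows "inverse (d powi p) \<le> (inverse c1) ^ nat p + c2 ^ nat (-p)"
proof (cases "p \<ge> 0")
  case True
  then obtain n where p: "p = int n" by (metis nonneg_eq_int)
  have "inverse (d powi p) = (inverse d) ^ n" using p by (simp add: power_inverse)
  also have "\<dots> \<le> (inverse c1) ^ n"
    using assms by (intro power_mono) (auto intro: le_imp_inverse_le)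
  finally show ?thesis using p assms by simp
next
  case False
  then obtain n where p: "p = - int n" by (metis linorder_not_le neg_int_cases nat_le_linear
        less_imp_le minus_minus nonneg_eq_int neg_0_le_iff_le)
  have "inverse (d powi p) = d ^ n" using p by (simp add: power_int_minus)
  also have "\<dots> \<le> c2 ^ n" using assms by (intro power_mono) auto
  finally show ?thesis using p assms by simp
qed



lemma sum_real_id: "(\<Sum>k=1..n. real k) = real n * (real n + 1) / 2"
  by (induction n) (simp_all add: field_simps)

theorem corollary3p3:
  fixes m :: int
  shows "\<exists>C::real. \<forall>N::nat. \<forall>x::real.
    N \<ge> 1 \<longrightarrow> - pi / 10 \<le> x \<longrightarrow> x \<le> 2 * pi \<longrightarrow>
    norm (exp (Complex x (8 * pi / 5) / of_nat N) /
          (2 * complex_of_real pi * \<i> * (exp (Complex x (8 * pi / 5) / of_nat N) - 1) powi (m + 1)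
             * qpoch (exp (Complex x (8 * pi / 5) / of_nat N)) N))
      \<le> C * real N powi (m + 1)"
proof -
  define c1 where "c1 = 2 * exp (-pi/20) * sin (4*pi/5)"
  define c2 where "c2 = exp (2*pi) * (2*pi + 8*pi/5)"
  define c3 where "c3 = exp (-pi/40 - (ln 2 + ln 3))"
  define K where "K = (inverse c1) ^ nat (m+1) + c2 ^ nat (-(m+1))"
  define C where "C = exp (2*pi) / (2*pi*c3) * K"
  have c1pos: "0 < c1" unfolding c1_def by (intro mult_pos_pos sin_gt_zero) auto
  have c3pos: "0 < c3" unfolding c3_def by simp
  show ?thesis
  proof (intro exI[of _ C] allI impI)
    fix N :: nat and x :: real
    assume N: "1 \<le> N" and x1: "-pi/10 \<le> x" and x2: "x \<le> 2*pi"
    have N0: "real N > 0" using N by simp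
    define a where "a = x / real N"
    define b where "b = 8*pi/(5*real N)"
    define q where "q = exp (Complex x (8*pi/5) / of_nat N)"
    have cab: "Complex x (8*pi/5) / of_nat N = Complex a b"
      unfolding a_def b_def by (simp add: complex_eq_iff)
    have qab: "q = exp (Complex a b)" unfolding q_def cab ..
    have qk: "q ^ k = exp (Complex (real k * a) (real k * b))" for k
    proof -
      have "q ^ k = exp (of_nat k * Complex a b)" unfolding qab by (simp add: exp_of_nat_mult)
      also have "of_nat k * Complex a b = Complex (real k * a) (real k * b)"
        by (simp add: complex_eq_iff)
      finally show ?thesis .
    qed
    have sinpos: "0 < sin (real k * (4*pi/(5*real N)))" if "k \<in> {1..N}" for k
    proof (rule sin_gt_zero)
      show "0 < real k * (4*pi/(5*real N))" using that N0 by simp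
      have "real k * (4*pi/(5*real N)) \<le> 4/5 * pi" using kh_le[of N k "4/5"] that N0 by simp
      then show "real k * (4*pi/(5*real N)) < pi" using pi_gt_zero by linarith
    qed
    have fac: "exp (real k * a / 2) * (2 * sin (real k * (4*pi/(5*real N)))) \<le> norm (1 - q^k)"
      if "k \<in> {1..N}" for k
    proof -
      have "2 * exp (real k * a / 2) * \<bar>sin (real k * b / 2)\<bar> \<le> norm (1 - q^k)"
        unfolding qk by (rule norm_1_minus_exp_Complex)
      moreover have "real k * b / 2 = real k * (4*pi/(5*real N))" unfolding b_def by simp
      ultimately show ?thesis using sinpos[OF that] by simp
    qed
    have nQ: "norm (qpoch q N) = (\<Prod>k=1..N. norm (1 - q^k))"
      unfolding qpoch_def by (simp add: prod_norm)
    have H1: "(\<Prod>k=1..N. exp (real k * a / 2) * (2 * sin (real k * (4*pi/(5*real N)))))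
          \<le> (\<Prod>k=1..N. norm (1 - q^k))"
      by (intro prod_mono conjI fac) (use sinpos in \<open>auto intro: less_imp_le\<close>)
    have H2: "(\<Prod>k=1..N. exp (real k * a / 2) * (2 * sin (real k * (4*pi/(5*real N)))))
        = exp (\<Sum>k=1..N. real k * a / 2) * exp (\<Sum>k=1..N. ln (2 * sin (real k * (4*pi/(5*real N)))))"
    proof -
      have "(\<Prod>k=1..N. 2 * sin (real k * (4*pi/(5*real N)))) = (\<Prod>k=1..N. exp (ln (2 * sin (real k * (4*pi/(5*real N))))))"
        using sinpos by (intro prod.cong) auto
      then show ?thesis by (simp add: prod.distrib exp_sum)
    qed
    have H3: "(\<Sum>k=1..N. real k * a / 2) = x * (real N + 1) / 4"
    proof -
      have "(\<Sum>k=1..N. real k * a / 2) = a / 2 * (\<Sum>k=1..N. real k)"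
        by (simp add: sum_distrib_left mult.commute)
      also have "\<dots> = x * (real N + 1) / 4" unfolding sum_real_id a_def using N0 by (simp add: field_simps)
      finally show ?thesis .
    qed
    have H4: "pi/40 * real N - (ln 2 + ln 3) \<le> (\<Sum>k=1..N. ln (2 * sin (real k * (4*pi/(5*real N)))))"
      by (rule sin_sum_lower[OF N])
    have Qb: "exp (x * (real N + 1) / 4 + (pi/40 * real N - (ln 2 + ln 3))) \<le> norm (qpoch q N)"
    proof -
      have "exp (x * (real N + 1) / 4 + (pi/40 * real N - (ln 2 + ln 3)))
          = exp (\<Sum>k=1..N. real k * a / 2) * exp (pi/40 * real N - (ln 2 + ln 3))"
        unfolding H3 by (simp add: exp_add)
      also have "\<dots> \<le> exp (\<Sum>k=1..N. real k * a / 2) * exp (\<Sum>k=1..N. ln (2 * sin (real k * (4*pi/(5*real N)))))"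
        using H4 by (intro mult_left_mono) auto
      also have "\<dots> \<le> norm (qpoch q N)" unfolding nQ H2[symmetric] by (rule H1)
      finally show ?thesis .
    qed
    have "-pi/40 - (ln 2 + ln 3) \<le> x * (real N + 1) / 4 + (pi/40 * real N - (ln 2 + ln 3))"
    proof -
      have "-pi/10 * (real N + 1) \<le> x * (real N + 1)" using x1 N0 by (intro mult_right_mono) auto
      then show ?thesis by (simp add: field_simps)
    qed
    then have Q: "c3 \<le> norm (qpoch q N)" unfolding c3_def using Qb
      by (meson exp_le_cancel_iff order_trans)
    define d where "d = real N * norm (q - 1)"
    have dl: "c1 \<le> d"
    proof -
      have "2 * exp (a / 2) * \<bar>sin (b / 2)\<bar> \<le> norm (1 - q)"
        unfolding qab by (rule norm_1_minus_exp_Complex)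
      then have "2 * exp (a / 2) * \<bar>sin (b / 2)\<bar> \<le> norm (q - 1)" by (simp add: norm_minus_commute)
      then have D1: "real N * (2 * exp (a / 2) * \<bar>sin (b / 2)\<bar>) \<le> d"
        unfolding d_def using N0 by (intro mult_left_mono) auto
      have D2: "\<bar>sin (real N * (b/2))\<bar> \<le> real N * \<bar>sin (b/2)\<bar>" by (rule sin_nat_mult_le)
      have D3: "real N * (b/2) = 4*pi/5" unfolding b_def using N0 by simp
      have D4: "sin (4*pi/5) > 0" by (rule sin_gt_zero) auto
      have D5: "exp (-pi/20) \<le> exp (a/2)"
      proof -
        have "-pi/10 / real N \<ge> -pi/10" using N by (simp add: field_simps)
        moreover have "x / real N \<ge> -pi/10 / real N" using x1 N0 by (intro divide_right_mono) auto
        ultimately show ?thesis unfolding a_def by simp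
      qed
      have "c1 = 2 * exp (-pi/20) * \<bar>sin (real N * (b/2))\<bar>" unfolding c1_def D3 using D4 by simp
      also have "\<dots> \<le> 2 * exp (a/2) * (real N * \<bar>sin (b/2)\<bar>)"
        using D5 D2 by (intro mult_mono mult_left_mono) auto
      also have "\<dots> = real N * (2 * exp (a / 2) * \<bar>sin (b / 2)\<bar>)" by simp
      also have "\<dots> \<le> d" by (rule D1)
      finally show ?thesis .
    qed
    have du: "d \<le> c2"
    proof -
      have "norm (q - 1) \<le> \<bar>exp a - 1\<bar> + exp (a/2) * \<bar>b\<bar>"
        unfolding qab by (rule norm_exp_Complex_minus_1)
      also have "\<dots> \<le> \<bar>a\<bar> * exp \<bar>a\<bar> + exp (a/2) * \<bar>b\<bar>"
        using abs_exp_minus_1[of a] by simp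
      finally have "d \<le> real N * (\<bar>a\<bar> * exp \<bar>a\<bar> + exp (a/2) * \<bar>b\<bar>)"
        unfolding d_def using N0 by (intro mult_left_mono) auto
      also have "\<dots> = \<bar>x\<bar> * exp \<bar>a\<bar> + exp (a/2) * (8*pi/5)"
        unfolding a_def b_def using N0 by (simp add: field_simps abs_divide)
      also have "\<dots> \<le> (2*pi) * exp (2*pi) + exp (2*pi) * (8*pi/5)"
      proof -
        have ax: "\<bar>x\<bar> \<le> 2*pi" using x1 x2 using pi_gt_zero by (simp add: abs_if)
        have "\<bar>x\<bar> / real N \<le> \<bar>x\<bar> / 1" using N by (intro divide_left_mono) auto
        then have "\<bar>a\<bar> \<le> \<bar>x\<bar>" unfolding a_def by (simp add: abs_divide)
        then have "exp \<bar>a\<bar> \<le> exp (2*pi)" using ax by simp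
        moreover have "a / 2 \<le> 2*pi" using \<open>\<bar>a\<bar> \<le> \<bar>x\<bar>\<close> ax pi_gt_zero abs_ge_self[of a] by linarith
        ultimately show ?thesis using ax
          by (intro add_mono mult_mono mult_right_mono) auto
      qed
      finally show ?thesis unfolding c2_def by (simp add: algebra_simps)
    qed
    have dpos: "0 < d" using c1pos dl by simp
    define p where "p = m + 1"
    have nq: "norm q \<le> exp (2*pi)"
    proof -
      have "norm q = exp a" unfolding qab by simp
      moreover have "a \<le> 2*pi"
      proof -
        have "2*pi*1 \<le> 2*pi*real N" using N by (intro mult_left_mono) auto
        then have "x \<le> 2*pi*real N" using x2 by linarith
        then show ?thesis unfolding a_def using N0 by (simp add: divide_le_eq)
      qed
      ultimately show ?thesis by simp
    qed
    have nqm1: "norm (q - 1) = d / real N" unfolding d_def using N0 by simp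
    have Qpos: "0 < norm (qpoch q N)" using Q c3pos by linarith
    have dp: "0 < d powi p" using dpos by simp
    have Np: "0 < real N powi p" using N0 by simp
    have "norm (q / (2 * complex_of_real pi * \<i> * (q - 1) powi p * qpoch q N))
        = norm q / (2 * pi * (d powi p / real N powi p) * norm (qpoch q N))"
      by (simp add: norm_mult norm_divide norm_power_int nqm1 power_int_divide_distrib)
    also have "\<dots> = (norm q / (2 * pi * norm (qpoch q N))) * inverse (d powi p) * real N powi p"
      using dp Np Qpos by (simp add: field_simps)
    also have "\<dots> \<le> (exp (2*pi) / (2*pi*c3)) * K * real N powi p"
    proof (intro mult_right_mono mult_mono)
      show "norm q / (2 * pi * norm (qpoch q N)) \<le> exp (2*pi) / (2*pi*c3)"
        using nq Q c3pos by (intro frac_le) auto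
      show "inverse (d powi p) \<le> K" unfolding K_def p_def by (rule inv_powi_bound) (use c1pos dl du in auto)
    qed (use Np dp c3pos in auto)
    finally show "norm (exp (Complex x (8 * pi / 5) / of_nat N) /
          (2 * complex_of_real pi * \<i> * (exp (Complex x (8 * pi / 5) / of_nat N) - 1) powi (m + 1)
             * qpoch (exp (Complex x (8 * pi / 5) / of_nat N)) N))
      \<le> C * real N powi (m + 1)"
      unfolding q_def[symmetric] p_def[symmetric] C_def .
  qed
qed

end
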